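(* Let $A\in\tilde\omega_n^{0,1}$ and let $C_1,\dots,C_k$ be all the directed cycles of $G_A$. Then $$\operatorname{per}(I-A)=\prod_{i=1}^k\big(1+(-1)^{l(C_i)}w(C_i)\big),$$ where the empty product equals $1$.
   Context: An $n\times n$ matrix is row substochastic if all its entries are nonnegative and each row sum is at most $1$. $\tilde\omega_n^{0,1}$ denotes the set of all $n\times n$ row substochastic matrices with zero main diagonal and at most one positive entry in each row. For an $n\times n$ matrix $A=[a_{ij}]$, $G_A$ is the directed weighted graph on vertices $v_1,\dots,v_n$ having a directed edge $v_i\to v_j$ of weight $a_{ij}$ exactly when $a_{ij}\ne 0$. For a directed cycle $C$ of $G_A$, $l(C)$ is its number of edges and $w(C)$ is the product of the weights of its edges. The permanent is $\operatorname{per}(M)=\sum_{\pi\in S_n}\prod_i m_{i\pi(i)}$, and $I$ is the identity matrix. *)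

theory Defs
  imports "HOL-Analysis.Analysis"
begin

text \<open>n x n real matrices are rendered as real^'n^'n for an arbitrary finite index type 'n
  (so n = CARD('n)).\<close>

definition per :: "real^'n^'n \<Rightarrow> real" where
  "per M = (\<Sum>p\<in>{p. p permutes (UNIV::'n set)}. \<Prod>i\<in>UNIV. M $ i $ p i)"

definition row_substochastic :: "real^'n^'n \<Rightarrow> bool" where
  "row_substochastic A \<longleftrightarrow> (\<forall>i j. 0 \<le> A $ i $ j) \<and> (\<forall>i. (\<Sum>j\<in>UNIV. A $ i $ j) \<le> 1)"

definition omega01 :: "real^'n^'n \<Rightarrow> bool" where
  "omega01 A \<longleftrightarrow> row_substochastic A \<and> (\<forall>i. A $ i $ i = 0)
     \<and> (\<forall>i j k. 0 < A $ i $ j \<longrightarrow> 0 < A $ i $ k \<longrightarrow> j = k)"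

definition is_dcycle_list :: "real^'n^'n \<Rightarrow> 'n list \<Rightarrow> bool" where
  "is_dcycle_list A cs \<longleftrightarrow> cs \<noteq> [] \<and> distinct cs \<and>
     (\<forall>i<length cs. A $ (cs ! i) $ (cs ! (Suc i mod length cs)) \<noteq> 0)"

definition cycle_edges :: "'n list \<Rightarrow> ('n \<times> 'n) set" where
  "cycle_edges cs = {(cs ! i, cs ! (Suc i mod length cs)) | i. i < length cs}"

text \<open>The directed cycles of G_A, each identified with its edge set (this identifies
  rotations of the same cyclic vertex list, i.e. the same cycle).\<close>
definition dcycles :: "real^'n^'n \<Rightarrow> ('n \<times> 'n) set set" where
  "dcycles A = {cycle_edges cs | cs. is_dcycle_list A cs}"

definition cyc_len :: "('n \<times> 'n) set \<Rightarrow> nat" where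
  "cyc_len C = card C"

definition cyc_weight :: "real^'n^'n \<Rightarrow> ('n \<times> 'n) set \<Rightarrow> real" where
  "cyc_weight A C = (\<Prod>(i,j)\<in>C. A $ i $ j)"

end

theory Submission
  imports Defs
begin

definition pSg :: "('n \<Rightarrow> 'n) \<Rightarrow> 'n set \<Rightarrow> 'n \<Rightarrow> 'n" where
  "pSg g W = (\<lambda>i. if i \<in> W then g i else i)"

locale fg =
  fixes A :: "real^'n^'n"
  assumes om: "omega01 A"
begin

definition f :: "'n \<Rightarrow> 'n" where "f i = (SOME j. A$i$j \<noteq> 0)"

lemma nonneg: "0 \<le> A$i$j" using om unfolding omega01_def row_substochastic_def by blast
lemma diag: "A$i$i = 0" using om unfolding omega01_def by blast

lemma nz_f: assumes "A$i$j \<noteq> 0" shows "j = f i"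
proof -
  have "A$i$(f i) \<noteq> 0" unfolding f_def using assms by (rule someI)
  hence "0 < A$i$(f i)" using nonneg[of i "f i"] by linarith
  moreover have "0 < A$i$j" using assms nonneg[of i j] by linarith
  ultimately show ?thesis using om unfolding omega01_def by blast
qed

lemma nz_f_ne: "A$i$(f i) \<noteq> 0 \<Longrightarrow> f i \<noteq> i" using diag by auto

lemma cyc_step: assumes "is_dcycle_list A cs" "i < length cs"
  shows "f (cs!i) = cs!(Suc i mod length cs)"
  using assms unfolding is_dcycle_list_def by (metis nz_f)

lemma cyc_nz: assumes "is_dcycle_list A cs" "v \<in> set cs" shows "A$v$(f v) \<noteq> 0"
proof -
  obtain i where "i < length cs" "v = cs!i" using assms(2) by (metis in_set_conv_nth)
  thus ?thesis using assms(1) cyc_step[OF assms(1)] unfolding is_dcycle_list_def by metis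
qed

lemma cyc_pow: assumes "is_dcycle_list A cs" "i < length cs"
  shows "(f^^k) (cs!i) = cs!((i+k) mod length cs)"
proof (induction k)
  case 0 then show ?case using assms(2) by simp
next
  case (Suc k)
  have "length cs > 0" using assms(1) unfolding is_dcycle_list_def by simp
  hence "(i+k) mod length cs < length cs" by simp
  then show ?case using Suc cyc_step[OF assms(1)] by (simp add: mod_Suc_eq)
qed

lemma cyc_orbit: assumes "is_dcycle_list A cs" "v \<in> set cs"
  shows "set cs = range (\<lambda>k. (f^^k) v)"
proof -
  obtain i where i: "i < length cs" "v = cs!i" using assms(2) by (metis in_set_conv_nth)
  let ?m = "length cs"
  have m: "?m > 0" using i by linarith
  show ?thesis
  proof
    show "range (\<lambda>k. (f^^k) v) \<subseteq> set cs" using cyc_pow[OF assms(1) i(1)] i m by auto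
    show "set cs \<subseteq> range (\<lambda>k. (f^^k) v)"
    proof
      fix w assume "w \<in> set cs"
      then obtain j where j: "j < ?m" "w = cs!j" by (metis in_set_conv_nth)
      have "i + (j + ?m - i) = j + ?m" using i by simp
      hence "(i + (j + ?m - i)) mod ?m = j" using j by simp
      hence "(f^^(j + ?m - i)) v = w" using cyc_pow[OF assms(1) i(1)] i j by simp
      thus "w \<in> range (\<lambda>k. (f^^k) v)" by (metis rangeI)
    qed
  qed
qed

lemma cyc_edges: assumes "is_dcycle_list A cs"
  shows "cycle_edges cs = (\<lambda>v. (v, f v)) ` set cs"
proof -
  have "cycle_edges cs = {(cs ! i, f (cs!i)) | i. i < length cs}"
    unfolding cycle_edges_def using cyc_step[OF assms] by metis
  also have "\<dots> = (\<lambda>v. (v, f v)) ` set cs" by (auto simp: in_set_conv_nth image_iff)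
  finally show ?thesis .
qed

lemma dc: assumes "C \<in> dcycles A"
  obtains cs where "is_dcycle_list A cs" "C = (\<lambda>v. (v, f v)) ` set cs" "fst ` C = set cs"
proof -
  obtain cs where cs: "is_dcycle_list A cs" "C = cycle_edges cs" using assms unfolding dcycles_def by blast
  have "C = (\<lambda>v. (v, f v)) ` set cs" using cs cyc_edges by simp
  moreover have "fst ` C = set cs" using calculation by (simp add: image_image)
  ultimately show ?thesis using that cs by blast
qed

lemma same: assumes "C1 \<in> dcycles A" "C2 \<in> dcycles A" "v \<in> fst ` C1" "v \<in> fst ` C2"
  shows "C1 = C2"
proof -
  obtain cs1 where 1: "is_dcycle_list A cs1" "C1 = (\<lambda>v. (v, f v)) ` set cs1" "fst ` C1 = set cs1"
    using dc[OF assms(1)] by blast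
  obtain cs2 where 2: "is_dcycle_list A cs2" "C2 = (\<lambda>v. (v, f v)) ` set cs2" "fst ` C2 = set cs2"
    using dc[OF assms(2)] by blast
  have "set cs1 = range (\<lambda>k. (f^^k) v)" using cyc_orbit[OF 1(1)] assms(3) 1(3) by simp
  moreover have "set cs2 = range (\<lambda>k. (f^^k) v)" using cyc_orbit[OF 2(1)] assms(4) 2(3) by simp
  ultimately have "set cs1 = set cs2" by simp
  thus ?thesis using 1 2 by simp
qed

lemma V_ne: assumes "C \<in> dcycles A" shows "fst ` C \<noteq> {}"
  using dc[OF assms] unfolding is_dcycle_list_def by (metis set_empty)

lemma V_closed: assumes "C \<in> dcycles A" "v \<in> fst ` C"
  shows "A$v$(f v) \<noteq> 0" "f v \<in> fst ` C"
proof -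
  obtain cs where 1: "is_dcycle_list A cs" "fst ` C = set cs" using dc[OF assms(1)] by metis
  show "A$v$(f v) \<noteq> 0" using cyc_nz[OF 1(1)] assms(2) 1(2) by simp
  have "(f^^1) v \<in> range (\<lambda>k. (f^^k) v)" by blast
  thus "f v \<in> fst ` C" using cyc_orbit[OF 1(1)] assms(2) 1(2) by simp
qed

lemma V_pred: assumes "C \<in> dcycles A" "z \<in> fst ` C"
  shows "\<exists>w\<in>fst ` C. f w = z"
proof -
  obtain cs where 1: "is_dcycle_list A cs" "fst ` C = set cs" using dc[OF assms(1)] by metis
  obtain i where i: "i < length cs" "z = cs!i" using assms(2) 1(2) by (metis in_set_conv_nth)
  let ?m = "length cs"
  have "(f^^?m) z = z" using cyc_pow[OF 1(1) i(1)] i by simp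
  moreover have "?m = Suc (?m - 1)" using i by simp
  ultimately have "f ((f^^(?m - 1)) z) = z" by (metis comp_apply funpow.simps(2))
  moreover have "(f^^(?m - 1)) z \<in> fst ` C" using cyc_orbit[OF 1(1)] assms(2) 1(2) by auto
  ultimately show ?thesis by blast
qed

lemma exists_cycle:
  assumes cl: "\<And>v. v \<in> M \<Longrightarrow> A$v$(f v) \<noteq> 0 \<and> f v \<in> M"
    and inj: "inj_on f M" and v: "v \<in> M"
  shows "\<exists>C\<in>dcycles A. v \<in> fst ` C \<and> fst ` C \<subseteq> M"
proof -
  have pw: "(f^^k) v \<in> M" for k by (induction k) (use v cl in auto)
  have cancel: "a \<le> b \<Longrightarrow> (f^^a) v = (f^^b) v \<Longrightarrow> (f^^(b-a)) v = v" for a b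
  proof (induction a arbitrary: b)
    case 0 then show ?case by simp
  next
    case (Suc a)
    then obtain b' where b: "b = Suc b'" by (cases b) auto
    have "f ((f^^a) v) = f ((f^^b') v)" using Suc.prems b by simp
    hence "(f^^a) v = (f^^b') v" using inj pw inj_on_def by metis
    thus ?case using Suc b by simp
  qed
  have "\<not> inj_on (\<lambda>k. (f^^k) v) {..card M}"
  proof
    assume "inj_on (\<lambda>k. (f^^k) v) {..card M}"
    hence "card {..card M} \<le> card M" by (rule card_inj_on_le) (use pw in auto)
    thus False by simp
  qed
  then obtain a0 b0 where ab0: "a0 \<noteq> b0" "(f^^a0) v = (f^^b0) v" unfolding inj_on_def by blast
  obtain a b where ab: "a < b" "(f^^a) v = (f^^b) v"
  proof (cases "a0 < b0")
    case True thus ?thesis using that ab0 by blast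
  next
    case False hence "b0 < a0" using ab0 by linarith
    thus ?thesis using that ab0 by (metis (no_types))
  qed
  hence ex: "\<exists>m. 0 < m \<and> (f^^m) v = v" using cancel[of a b] by (intro exI[of _ "b-a"]) auto
  define m where "m = (LEAST m. 0 < m \<and> (f^^m) v = v)"
  have m: "0 < m" "(f^^m) v = v" using LeastI_ex[OF ex] unfolding m_def by auto
  have mmin: "\<not> (0 < k \<and> (f^^k) v = v)" if "k < m" for k
    using not_less_Least[OF that[unfolded m_def]] by simp
  define cs where "cs = map (\<lambda>k. (f^^k) v) [0..<m]"
  have len: "length cs = m" unfolding cs_def by simp
  have nth: "k < m \<Longrightarrow> cs!k = (f^^k) v" for k unfolding cs_def by simp
  have dist: "distinct cs"
    unfolding distinct_conv_nth len
  proof (intro allI impI)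
    fix i j assume ij: "i < m" "j < m" "i \<noteq> j"
    show "cs!i \<noteq> cs!j"
    proof
      assume eq: "cs!i = cs!j"
      show False
      proof (cases "i < j")
        case True
        have "(f^^(j-i)) v = v" using cancel[of i j] eq nth ij True by simp
        moreover have "j - i < m" "0 < j - i" using ij True by linarith+
        ultimately show False using mmin by blast
      next
        case False
        hence ji: "j < i" using ij by linarith
        have "(f^^(i-j)) v = v" using cancel[of j i] eq nth ij ji by simp
        moreover have "i - j < m" "0 < i - j" using ij ji by linarith+
        ultimately show False using mmin by blast
      qed
    qed
  qed
  have step: "cs!(Suc i mod m) = f (cs!i)" if "i < m" for i
  proof (cases "Suc i < m")
    case True then show ?thesis using nth that by simp
  next
    case False
    hence "Suc i = m" using that by simp
    hence "cs!(Suc i mod m) = cs!0" by simp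
    also have "\<dots> = v" using nth m by simp
    also have "v = (f^^(Suc i)) v" using m \<open>Suc i = m\<close> by simp
    also have "\<dots> = f (cs!i)" using nth that by simp
    finally show ?thesis .
  qed
  have setcs: "set cs \<subseteq> M" unfolding cs_def using pw by auto
  have isd: "is_dcycle_list A cs"
    unfolding is_dcycle_list_def len
  proof (intro conjI allI impI)
    show "cs \<noteq> []" using len m by auto
    show "distinct cs" by (rule dist)
    fix i assume "i < m"
    hence "cs!i \<in> M" using setcs len nth_mem by blast
    hence "A $ (cs!i) $ (f (cs!i)) \<noteq> 0" using cl by blast
    thus "A $ (cs!i) $ (cs!(Suc i mod m)) \<noteq> 0" using step \<open>i < m\<close> by simp
  qed
  have ce: "cycle_edges cs \<in> dcycles A" unfolding dcycles_def using isd by blast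
  have fe: "fst ` cycle_edges cs = set cs" using cyc_edges[OF isd] by (simp add: image_image)
  have vin: "v \<in> set cs" using nth[of 0] m len nth_mem[of 0 cs] by simp
  show ?thesis apply (rule bexI[OF _ ce]) unfolding fe using vin setcs by blast
qed


definition VS :: "('n\<times>'n) set set \<Rightarrow> 'n set" where "VS S = (\<Union>C\<in>S. fst ` C)"
abbreviation pS where "pS S \<equiv> pSg f (VS S)"
definition tm where "tm p = (\<Prod>i\<in>UNIV. (mat 1 - A) $ i $ p i)"

lemma VS_nz: "S \<subseteq> dcycles A \<Longrightarrow> i \<in> VS S \<Longrightarrow> A$i$(f i) \<noteq> 0"
  unfolding VS_def using V_closed by blast

lemma pS_perm: assumes "S \<subseteq> dcycles A" shows "pS S permutes UNIV"
proof -
  have surj: "surj (pS S)"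
  proof -
    { fix z
      have "z \<in> range (pS S)"
      proof (cases "z \<in> VS S")
        case True
        then obtain C where C: "C \<in> S" "z \<in> fst ` C" unfolding VS_def by blast
        then obtain w where w: "w \<in> fst ` C" "f w = z" using V_pred assms by blast
        have "w \<in> VS S" using C w unfolding VS_def by blast
        hence "pS S w = z" using w unfolding pSg_def by simp
        thus ?thesis by (metis rangeI)
      next
        case False
        hence "pS S z = z" unfolding pSg_def by simp
        thus ?thesis by (metis rangeI)
      qed }
    thus ?thesis by blast
  qed
  hence "inj (pS S)" using finite_surj_inj[of UNIV "pS S"] by simp
  hence "bij (pS S)" using surj by (simp add: bij_def)
  thus ?thesis by (intro bij_imp_permutes) auto
qed

lemma pS_tm: assumes "S \<subseteq> dcycles A" shows "tm (pS S) = (\<Prod>i\<in>VS S. - A$i$(f i))"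
proof -
  have "tm (pS S) = (\<Prod>i\<in>UNIV. if i \<in> VS S then - A$i$(f i) else 1)"
    unfolding tm_def
  proof (rule prod.cong[OF refl])
    fix i show "(mat 1 - A) $ i $ pS S i = (if i \<in> VS S then - A$i$(f i) else 1)"
      using VS_nz[OF assms, of i] nz_f_ne[of i] diag[of i] unfolding pSg_def by (auto simp: mat_def)
  qed
  also have "\<dots> = (\<Prod>i\<in>UNIV \<inter> VS S. - A$i$(f i))" by (rule prod.inter_restrict[symmetric]) simp
  finally show ?thesis by simp
qed

lemma pS_inj: "inj_on pS (Pow (dcycles A))"
proof (rule inj_onI)
  fix S T assume S: "S \<in> Pow (dcycles A)" and T: "T \<in> Pow (dcycles A)" and eq: "pS S = pS T"
  have mv: "i \<in> VS U \<longleftrightarrow> pS U i \<noteq> i" if "U \<subseteq> dcycles A" for U i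
    using VS_nz[OF that, of i] nz_f_ne[of i] unfolding pSg_def by auto
  have V: "VS S = VS T" using mv[of S] mv[of T] S T eq by auto
  have sub: "S1 \<subseteq> T1" if h: "S1 \<subseteq> dcycles A" "T1 \<subseteq> dcycles A" "VS S1 = VS T1" for S1 T1
  proof
    fix C assume C: "C \<in> S1"
    have "fst ` C \<noteq> {}" using V_ne C h(1) by blast
    then obtain v where v: "v \<in> fst ` C" by blast
    hence "v \<in> VS T1" using h(3) C unfolding VS_def by blast
    then obtain C' where C': "C' \<in> T1" "v \<in> fst ` C'" unfolding VS_def by blast
    have "C = C'" using same[of C C' v] C C' v h by blast
    thus "C \<in> T1" using C' by simp
  qed
  show "S = T" using sub[of S T] sub[of T S] S T V by auto
qed

lemma tm_nz: assumes p: "p permutes UNIV" and nz: "tm p \<noteq> 0"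
  shows "p \<in> pS ` Pow (dcycles A)"
proof -
  have ent: "(mat 1 - A) $ i $ p i \<noteq> 0" for i using nz unfolding tm_def by auto
  have mv: "p i = f i \<and> A$i$(f i) \<noteq> 0" if "p i \<noteq> i" for i
  proof -
    have "A$i$(p i) \<noteq> 0" using ent[of i] that by (simp add: mat_def)
    thus ?thesis using nz_f by metis
  qed
  define M where "M = {i. p i \<noteq> i}"
  have injp: "inj p" using permutes_inj[OF p] .
  have cl: "A$v$(f v) \<noteq> 0 \<and> f v \<in> M" if "v \<in> M" for v
  proof -
    have pv: "p v \<noteq> v" using that M_def by simp
    have "p (p v) \<noteq> p v" using injp pv by (metis injD)
    thus ?thesis using mv[OF pv] unfolding M_def by simp
  qed
  have injf: "inj_on f M"
  proof (rule inj_onI)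
    fix x y assume "x \<in> M" "y \<in> M" "f x = f y"
    hence "p x = p y" using mv unfolding M_def by auto
    thus "x = y" using injp by (metis injD)
  qed
  define S where "S = {C \<in> dcycles A. fst ` C \<subseteq> M}"
  have Ssub: "S \<subseteq> dcycles A" unfolding S_def by auto
  have VSM: "VS S = M"
  proof
    show "VS S \<subseteq> M" unfolding VS_def S_def by auto
    show "M \<subseteq> VS S"
    proof
      fix v assume "v \<in> M"
      then obtain C where "C \<in> dcycles A" "v \<in> fst ` C" "fst ` C \<subseteq> M"
        using exists_cycle[OF cl injf] by blast
      thus "v \<in> VS S" unfolding VS_def S_def by blast
    qed
  qed
  have "p = pS S"
  proof
    fix i show "p i = pS S i" unfolding pSg_def VSM using mv M_def by auto
  qed
  thus ?thesis using Ssub by blast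
qed

lemma xC: assumes "C \<in> dcycles A"
  shows "(-1) ^ cyc_len C * cyc_weight A C = (\<Prod>i\<in>fst ` C. - A$i$(f i))"
proof -
  obtain cs where 1: "is_dcycle_list A cs" "C = (\<lambda>v. (v, f v)) ` set cs" "fst ` C = set cs"
    using dc[OF assms] by metis
  have inj: "inj_on (\<lambda>v. (v, f v)) (set cs)" by (auto simp: inj_on_def)
  have a: "cyc_len C = card (set cs)" unfolding cyc_len_def 1(2) using card_image[OF inj] .
  have b: "cyc_weight A C = (\<Prod>v\<in>set cs. A$v$(f v))" unfolding cyc_weight_def 1(2)
    by (simp add: prod.reindex[OF inj])
  have "(\<Prod>i\<in>set cs. - A$i$(f i)) = (\<Prod>i\<in>set cs. (-1) * A$i$(f i))" by simp
  also have "\<dots> = (\<Prod>i\<in>set cs. -1) * (\<Prod>i\<in>set cs. A$i$(f i))" by (rule prod.distrib)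
  also have "\<dots> = (-1)^card (set cs) * (\<Prod>i\<in>set cs. A$i$(f i))" by simp
  finally show ?thesis using a b 1(3) by simp
qed

theorem main: "per (mat 1 - A) = (\<Prod>C\<in>dcycles A. 1 + (-1) ^ cyc_len C * cyc_weight A C)"
proof -
  let ?D = "dcycles A"
  let ?g = "\<lambda>i. - A$i$(f i)"
  have "per (mat 1 - A) = (\<Sum>p\<in>{p. p permutes UNIV}. tm p)" unfolding per_def tm_def by simp
  also have "\<dots> = (\<Sum>p\<in>pS ` Pow ?D. tm p)"
    by (rule sum.mono_neutral_right) (use pS_perm tm_nz in auto)
  also have "\<dots> = (\<Sum>S\<in>Pow ?D. tm (pS S))" using sum.reindex[OF pS_inj, of tm] by (simp add: comp_def)
  also have "\<dots> = (\<Sum>S\<in>Pow ?D. \<Prod>C\<in>S. \<Prod>i\<in>fst ` C. ?g i)"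
  proof (rule sum.cong[OF refl])
    fix S assume S: "S \<in> Pow ?D"
    have "tm (pS S) = prod ?g (VS S)" using pS_tm S by blast
    also have "\<dots> = (\<Prod>C\<in>S. \<Prod>i\<in>fst ` C. ?g i)" unfolding VS_def
    proof (rule prod.UNION_disjoint)
      show "finite S" by simp
      show "\<forall>i\<in>S. finite (fst ` i)" by simp
      show "\<forall>i\<in>S. \<forall>j\<in>S. i \<noteq> j \<longrightarrow> fst ` i \<inter> fst ` j = {}" using S same by blast
    qed
    finally show "tm (pS S) = (\<Prod>C\<in>S. \<Prod>i\<in>fst ` C. ?g i)" .
  qed
  also have "\<dots> = (\<Sum>S\<in>Pow ?D. (\<Prod>C\<in>S. (-1) ^ cyc_len C * cyc_weight A C) * (\<Prod>C\<in>?D - S. 1))"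
  proof (rule sum.cong[OF refl])
    fix S assume S: "S \<in> Pow ?D"
    have "(\<Prod>C\<in>S. \<Prod>i\<in>fst ` C. ?g i) = (\<Prod>C\<in>S. (-1) ^ cyc_len C * cyc_weight A C)"
      using xC S by (intro prod.cong) auto
    thus "(\<Prod>C\<in>S. \<Prod>i\<in>fst ` C. ?g i) = (\<Prod>C\<in>S. (-1) ^ cyc_len C * cyc_weight A C) * (\<Prod>C\<in>?D - S. 1)"
      by simp
  qed
  also have "\<dots> = (\<Prod>C\<in>?D. (-1) ^ cyc_len C * cyc_weight A C + 1)" by (rule prod_add[symmetric]) simp
  also have "\<dots> = (\<Prod>C\<in>?D. 1 + (-1) ^ cyc_len C * cyc_weight A C)" by (simp add: add.commute)
  finally show ?thesis .
qed

end

theorem mainTheorem7: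
  fixes A :: "real^'n^'n"
  assumes "omega01 A"
  shows "per (mat 1 - A) = (\<Prod>C\<in>dcycles A. 1 + (-1) ^ cyc_len C * cyc_weight A C)"
  using fg.main[OF fg.intro[OF assms]] .

end
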